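(* In the setting of MP (two-stage mini-pooling) with quantitative assays subject to multiplicative measurement error, the sensitivity of MP satisfies $\mathrm{SENS}_{\mathrm{IND}}^2\le\mathrm{SENS}_{\mathrm{MP}}\le\mathrm{SENS}_{\mathrm{IND}}$, where: for cutoff $C>0$ and pool size $K\ge2$, individuals have true values $V_j\ge0$ (failure iff $V_j>C$) and measured values $\widetilde V_j=V_j\varepsilon_j$, the pool has measured total $\widetilde T_1=\varepsilon_{\mathrm{pool}}\sum_{j=1}^KV_j$, the errors $\varepsilon_1,\dots,\varepsilon_K,\varepsilon_{\mathrm{pool}}$ are i.i.d. with $\varepsilon\overset{d}{=}\varepsilon^{-1}$ and independent of the $V$'s; $\mathrm{SENS}_{\mathrm{IND}}=\Pr(\widetilde V_k>C\mid V_k>C)$ and $\mathrm{SENS}_{\mathrm{MP}}=\Pr(\widetilde T_1>C,\ \widetilde V_k>C\mid V_k>C)$.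
   Context: MP classifies individual $k$ positive iff the pool is positive ($\widetilde T_1>C$, i.e. measured pool value exceeds $C/K$) and the individual's own measured value exceeds $C$. Values $V_j$ are nonnegative. *)

theory Defs
  imports "HOL-Probability.Probability"
begin

text \<open>Two-stage mini-pooling (MP). Individuals are indexed by 0..K-1, the
  measurement errors eps 0 .. eps (K-1) belong to the individuals and eps K is
  the pool error.\<close>

definition sens_ind :: "'a measure \<Rightarrow> (nat \<Rightarrow> 'a \<Rightarrow> real) \<Rightarrow> (nat \<Rightarrow> 'a \<Rightarrow> real) \<Rightarrow> real \<Rightarrow> nat \<Rightarrow> real" where
  "sens_ind M V eps C k = \<P>(x in M. V k x * eps k x > C \<bar> V k x > C)"

definition sens_mp :: "'a measure \<Rightarrow> (nat \<Rightarrow> 'a \<Rightarrow> real) \<Rightarrow> (nat \<Rightarrow> 'a \<Rightarrow> real) \<Rightarrow> real \<Rightarrow> nat \<Rightarrow> nat \<Rightarrow> real" where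
  "sens_mp M V eps C K k =
     \<P>(x in M. eps K x * (\<Sum>j<K. V j x) > C \<and> V k x * eps k x > C \<bar> V k x > C)"

end

theory Submission
  imports Defs
begin

theorem mainTheorem6:
  fixes M :: "'a measure" and V eps :: "nat \<Rightarrow> 'a \<Rightarrow> real" and C :: real and K k :: nat
  assumes "prob_space M"
    and "C > 0" and "K \<ge> 2" and "k < K"
    and "\<forall>j<K. V j \<in> borel_measurable M"
    and "\<forall>j<K. \<forall>x\<in>space M. V j x \<ge> 0"
    and "prob_space.indep_vars M (\<lambda>_. borel) eps {..K}"
    and "\<forall>i\<le>K. distr M borel (eps i) = distr M borel (eps 0)"
    and "distr M borel (eps 0) = distr M borel (\<lambda>x. inverse (eps 0 x))"
    and "prob_space.indep_var M
           (PiM {..K} (\<lambda>_. borel)) (\<lambda>x. restrict (\<lambda>i. eps i x) {..K})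
           (PiM {..<K} (\<lambda>_. borel)) (\<lambda>x. restrict (\<lambda>j. V j x) {..<K})"
  shows "(sens_ind M V eps C k)\<^sup>2 \<le> sens_mp M V eps C K k
         \<and> sens_mp M V eps C K k \<le> sens_ind M V eps C k"
proof -
  interpret prob_space M by fact
  have epsm: "eps i \<in> borel_measurable M" if "i \<le> K" for i
    using assms(7) that unfolding indep_vars_def by auto
  have Vm: "V j \<in> borel_measurable M" if "j < K" for j
    using assms(5) that by auto
  have [measurable]: "eps k \<in> borel_measurable M" "eps K \<in> borel_measurable M" "V k \<in> borel_measurable M"
    using epsm Vm assms(4) by auto
  define \<mu> where "\<mu> = distr M borel (eps 0)"
  have dmu: "distr M borel (eps i) = \<mu>" if "i \<le> K" for i
    using assms(8) that unfolding \<mu>_def by blast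
  define PK where "PK = PiM {..K} (\<lambda>_. \<mu>)"
  define E where "E = (\<lambda>x. restrict (\<lambda>i. eps i x) {..K})"
  define Vv where "Vv = (\<lambda>x. restrict (\<lambda>j. V j x) {..<K})"
  define \<nu> where "\<nu> = distr M (PiM {..<K} (\<lambda>_. borel)) Vv"
  have Em: "E \<in> measurable M (PiM {..K} (\<lambda>_. borel))"
    unfolding E_def by (rule measurable_restrict) (use epsm in auto)
  have Vvm: "Vv \<in> measurable M (PiM {..<K} (\<lambda>_. borel))"
    unfolding Vv_def by (rule measurable_restrict) (use Vm in auto)
  define eps' where "eps' i = (if i \<le> K then eps i else (\<lambda>_. 0::real))" for i
  have rv': "random_variable borel (eps' i)" for i
    using epsm by (auto simp: eps'_def)
  have "indep_vars (\<lambda>_. borel) eps' {..K}"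
    using assms(7) by (subst indep_vars_cong[where Y=eps and N'="\<lambda>_. borel" and J="{..K}"]) (auto simp: eps'_def)
  then have "distr M (PiM {..K} (\<lambda>_. borel)) (\<lambda>x. \<lambda>i\<in>{..K}. eps' i x) = (PiM {..K} (\<lambda>i. distr M borel (eps' i)))"
    by (subst (asm) indep_vars_iff_distr_eq_PiM) (use rv' in auto)
  moreover have "(\<lambda>x. \<lambda>i\<in>{..K}. eps' i x) = E"
    unfolding E_def eps'_def by (auto simp: fun_eq_iff)
  moreover have "(PiM {..K} (\<lambda>i. distr M borel (eps' i))) = PK"
    unfolding PK_def by (rule PiM_cong) (auto simp: eps'_def dmu)
  ultimately have distrE: "distr M (PiM {..K} (\<lambda>_. borel)) E = PK" by simp
  have joint: "distr M (PiM {..K} (\<lambda>_. borel) \<Otimes>\<^sub>M PiM {..<K} (\<lambda>_. borel)) (\<lambda>x. (E x, Vv x)) = PK \<Otimes>\<^sub>M \<nu>"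
    using assms(10) unfolding indep_var_distribution_eq E_def[symmetric] Vv_def[symmetric]
    by (simp add: distrE \<nu>_def)
  have probmu: "prob_space \<mu>" unfolding \<mu>_def by (rule prob_space_distr) (use epsm in auto)
  interpret PP: product_prob_space "\<lambda>_. \<mu>" "{..K}"
    by (simp add: product_prob_space_def product_sigma_finite_def probmu prob_space_imp_sigma_finite product_prob_space_axioms_def)
  have probPK: "prob_space PK" unfolding PK_def by (rule prob_space_PiM) (use probmu in auto)
  have probnu: "prob_space \<nu>" unfolding \<nu>_def by (rule prob_space_distr) (use Vvm in auto)
  interpret PN: pair_sigma_finite PK \<nu>
    by (simp add: pair_sigma_finite_def probPK probnu prob_space_imp_sigma_finite)
  have setsmu: "sets \<mu> = sets borel" unfolding \<mu>_def by simp
  have setsPK: "sets PK = sets (PiM {..K} (\<lambda>_. borel::real measure))"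
    unfolding PK_def by (rule sets_PiM_cong) (auto simp: setsmu)
  have setsnu: "sets \<nu> = sets (PiM {..<K} (\<lambda>_. borel::real measure))"
    unfolding \<nu>_def by simp
  have L1: "(\<integral>\<^sup>+x. h (E x, Vv x) \<partial>M) = (\<integral>\<^sup>+x. (\<integral>\<^sup>+\<omega>. h (\<omega>, Vv x) \<partial>PK) \<partial>M)"
    if hm: "h \<in> borel_measurable (PiM {..K} (\<lambda>_. borel) \<Otimes>\<^sub>M PiM {..<K} (\<lambda>_. borel))" for h
  proof -
    have hm': "h \<in> borel_measurable (PK \<Otimes>\<^sub>M \<nu>)"
      by (subst measurable_cong_sets[OF sets_pair_measure_cong[OF setsPK setsnu] refl]) (rule hm)
    have "(\<integral>\<^sup>+x. h (E x, Vv x) \<partial>M) = (\<integral>\<^sup>+z. h z \<partial>(distr M (PiM {..K} (\<lambda>_. borel) \<Otimes>\<^sub>M PiM {..<K} (\<lambda>_. borel)) (\<lambda>x. (E x, Vv x))))"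
      by (subst nn_integral_distr) (use hm Em Vvm in \<open>auto intro!: measurable_Pair\<close>)
    also have "\<dots> = integral\<^sup>N (PK \<Otimes>\<^sub>M \<nu>) h" by (simp add: joint)
    also have "\<dots> = (\<integral>\<^sup>+u. (\<integral>\<^sup>+\<omega>. h (\<omega>, u) \<partial>PK) \<partial>\<nu>)"
      by (rule PN.nn_integral_snd[symmetric]) (rule hm')
    also have "\<dots> = (\<integral>\<^sup>+x. (\<integral>\<^sup>+\<omega>. h (\<omega>, Vv x) \<partial>PK) \<partial>M)"
    proof -
      have sw: "(\<lambda>(u, \<omega>). h (\<omega>, u)) \<in> borel_measurable (\<nu> \<Otimes>\<^sub>M PK)"
        using measurable_pair_swap_iff[of h PK \<nu> borel] hm' by simp
      have "(\<lambda>u. \<integral>\<^sup>+\<omega>. h (\<omega>, u) \<partial>PK) \<in> borel_measurable \<nu>"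
        using PN.M1.borel_measurable_nn_integral[of "\<lambda>u \<omega>. h (\<omega>, u)" \<nu>] sw by simp
      then have m2: "(\<lambda>u. \<integral>\<^sup>+\<omega>. h (\<omega>, u) \<partial>PK) \<in> borel_measurable (PiM {..<K} (\<lambda>_. borel))"
        by (subst (asm) measurable_cong_sets[OF setsnu refl])
      show ?thesis unfolding \<nu>_def by (subst nn_integral_distr) (use m2 Vvm in auto)
    qed
    finally show ?thesis .
  qed
  define \<phi> where "\<phi> e v = (if v * e > C \<and> v > C then 1 else 0 :: ennreal)" for e v :: real
  define p where "p v = (\<integral>\<^sup>+e. \<phi> e v \<partial>\<mu>)" for v
  define g where "g v = (if v > C then 1 else 0 :: ennreal)" for v :: real
  have \<phi>m[measurable]: "(\<lambda>(e, v). \<phi> e v) \<in> borel_measurable (borel \<Otimes>\<^sub>M borel)"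
    unfolding \<phi>_def by measurable
  have \<phi>m2[measurable]: "(\<lambda>e. \<phi> e v) \<in> borel_measurable borel" for v
    unfolding \<phi>_def by measurable
  interpret MU: prob_space \<mu> by (rule probmu)
  have pm[measurable]: "p \<in> borel_measurable borel"
  proof -
    have "(\<lambda>(v, e). \<phi> e v) \<in> borel_measurable (borel \<Otimes>\<^sub>M borel)"
      unfolding \<phi>_def by measurable
    then have "(\<lambda>(v, e). \<phi> e v) \<in> borel_measurable (borel \<Otimes>\<^sub>M \<mu>)"
      by (subst measurable_cong_sets[OF sets_pair_measure_cong[OF refl setsmu] refl])
    then show ?thesis
      unfolding p_def using sigma_finite_measure.borel_measurable_nn_integral[OF prob_space_imp_sigma_finite[OF probmu], of "\<lambda>v e. \<phi> e v" borel] by simp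
  qed
  have gm[measurable]: "g \<in> borel_measurable borel" unfolding g_def by measurable
  have inner: "(\<integral>\<^sup>+\<omega>. (\<Prod>i\<in>S. \<phi> (\<omega> i) v) \<partial>PK) = p v ^ card S" if S: "S \<subseteq> {..K}" for S v
  proof -
    have fS: "finite S" using S finite_subset by blast
    have "(\<integral>\<^sup>+\<omega>. (\<Prod>i\<in>S. \<phi> (\<omega> i) v) \<partial>PK)
        = (\<integral>\<^sup>+\<omega>. (\<Prod>i\<in>{..K}. (\<lambda>e. if i \<in> S then \<phi> e v else 1) (\<omega> i)) \<partial>PK)"
    proof (rule nn_integral_cong)
      fix \<omega>
      have "(\<Prod>i\<in>S. \<phi> (\<omega> i) v) = (\<Prod>i\<in>{..K} \<inter> S. \<phi> (\<omega> i) v)"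
        using S by (simp add: Int_absorb1)
      also have "\<dots> = (\<Prod>i\<in>{..K}. if i \<in> S then \<phi> (\<omega> i) v else 1)"
        by (rule prod.inter_restrict) simp
      finally show "(\<Prod>i\<in>S. \<phi> (\<omega> i) v) = (\<Prod>i\<in>{..K}. (\<lambda>e. if i \<in> S then \<phi> e v else 1) (\<omega> i))"
        by simp
    qed
    also have "\<dots> = (\<Prod>i\<in>{..K}. \<integral>\<^sup>+e. (if i \<in> S then \<phi> e v else 1) \<partial>\<mu>)"
      unfolding PK_def by (rule PP.product_nn_integral_prod) (auto simp: measurable_cong_sets[OF setsmu refl])
    also have "\<dots> = (\<Prod>i\<in>{..K}. if i \<in> S then p v else 1)"
      by (rule prod.cong) (auto simp: p_def prob_space.emeasure_space_1[OF probmu])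
    also have "\<dots> = (\<Prod>i\<in>{..K} \<inter> S. p v)"
      by (rule prod.inter_restrict[symmetric]) simp
    also have "\<dots> = p v ^ card S"
      using S by (simp add: Int_absorb1)
    finally show ?thesis .
  qed
  have ES: "(\<integral>\<^sup>+x. (\<Prod>i\<in>S. \<phi> (eps i x) (V k x)) \<partial>M) = (\<integral>\<^sup>+x. p (V k x) ^ card S \<partial>M)"
    if S: "S \<subseteq> {..K}" for S
  proof -
    define h where "h = (\<lambda>(\<omega>::nat \<Rightarrow> real, u::nat \<Rightarrow> real). \<Prod>i\<in>S. \<phi> (\<omega> i) (u k))"
    have hm: "h \<in> borel_measurable (PiM {..K} (\<lambda>_. borel) \<Otimes>\<^sub>M PiM {..<K} (\<lambda>_. borel))"
    proof -
      have sk: "(\<lambda>x::(nat\<Rightarrow>real)\<times>(nat\<Rightarrow>real). snd x k) \<in> borel_measurable (PiM {..K} (\<lambda>_. borel) \<Otimes>\<^sub>M PiM {..<K} (\<lambda>_. borel))"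
        by (rule measurable_compose[OF measurable_snd]) (use assms(4) in simp)
      show ?thesis unfolding h_def apply measurable using S sk by auto
    qed
    have "(\<integral>\<^sup>+x. (\<Prod>i\<in>S. \<phi> (eps i x) (V k x)) \<partial>M) = (\<integral>\<^sup>+x. h (E x, Vv x) \<partial>M)"
      by (rule nn_integral_cong) (use S assms(4) in \<open>auto simp: h_def E_def Vv_def subset_iff intro!: prod.cong\<close>)
    also have "\<dots> = (\<integral>\<^sup>+x. (\<integral>\<^sup>+\<omega>. h (\<omega>, Vv x) \<partial>PK) \<partial>M)" by (rule L1[OF hm])
    also have "\<dots> = (\<integral>\<^sup>+x. p (V k x) ^ card S \<partial>M)"
      by (rule nn_integral_cong) (use S assms(4) in \<open>simp add: h_def Vv_def inner\<close>)
    finally show ?thesis .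
  qed
  have Vsm[measurable]: "(\<lambda>x. \<Sum>j<K. V j x) \<in> borel_measurable M"
    using Vm by (intro borel_measurable_sum) auto
  define A where "A = measure M {x \<in> space M. V k x * eps k x > C \<and> V k x > C}"
  define B where "B = measure M {x \<in> space M. (eps K x * (\<Sum>j<K. V j x) > C \<and> V k x * eps k x > C) \<and> V k x > C}"
  define B' where "B' = measure M {x \<in> space M. (V k x * eps k x > C \<and> V k x * eps K x > C) \<and> V k x > C}"
  define D where "D = measure M {x \<in> space M. V k x > C}"
  have si: "sens_ind M V eps C k = A / D" unfolding sens_ind_def cond_prob_def A_def D_def by simp
  have sm: "sens_mp M V eps C K k = B / D" unfolding sens_mp_def cond_prob_def B_def D_def by simp
  have BA: "B \<le> A" unfolding A_def B_def by (rule finite_measure_mono) auto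
  have B'B: "B' \<le> B" unfolding B'_def B_def
  proof (rule finite_measure_mono)
    show "{x \<in> space M. (V k x * eps k x > C \<and> V k x * eps K x > C) \<and> V k x > C}
      \<subseteq> {x \<in> space M. (eps K x * (\<Sum>j<K. V j x) > C \<and> V k x * eps k x > C) \<and> V k x > C}"
    proof safe
      fix x assume x: "x \<in> space M" "C < V k x * eps k x" "C < V k x * eps K x" "C < V k x"
      have "V k x > 0" using x assms(2) by linarith
      then have eK: "eps K x > 0" using x assms(2) by (smt (verit) mult_nonneg_nonpos)
      have "V k x \<le> (\<Sum>j<K. V j x)"
        by (rule member_le_sum) (use assms(4,6) x in auto)
      then have "eps K x * V k x \<le> eps K x * (\<Sum>j<K. V j x)" using eK by simp
      then show "C < eps K x * (\<Sum>j<K. V j x)" using x by (simp add: mult.commute)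
    qed
  qed measurable
  have pg: "p v * g v = p v" for v
  proof (cases "v > C")
    case True then show ?thesis by (simp add: g_def)
  next
    case False
    then have "p v = 0" unfolding p_def \<phi>_def by simp
    then show ?thesis by simp
  qed
  have g2: "g v ^ 2 = g v" for v by (simp add: g_def)
  have eA: "ennreal A = (\<integral>\<^sup>+x. p (V k x) \<partial>M)"
  proof -
    have "ennreal A = (\<integral>\<^sup>+x. indicator {x \<in> space M. V k x * eps k x > C \<and> V k x > C} x \<partial>M)"
      unfolding A_def by (subst nn_integral_indicator) (auto simp: emeasure_eq_measure)
    also have "\<dots> = (\<integral>\<^sup>+x. (\<Prod>i\<in>{k}. \<phi> (eps i x) (V k x)) \<partial>M)"
      by (rule nn_integral_cong) (auto simp: \<phi>_def indicator_def)
    also have "\<dots> = (\<integral>\<^sup>+x. p (V k x) ^ card {k} \<partial>M)"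
      by (rule ES) (use assms(4) in auto)
    finally show ?thesis by simp
  qed
  have eB: "ennreal B' = (\<integral>\<^sup>+x. p (V k x) ^ 2 \<partial>M)"
  proof -
    have "ennreal B' = (\<integral>\<^sup>+x. indicator {x \<in> space M. (V k x * eps k x > C \<and> V k x * eps K x > C) \<and> V k x > C} x \<partial>M)"
      unfolding B'_def by (subst nn_integral_indicator) (auto simp: emeasure_eq_measure)
    also have "\<dots> = (\<integral>\<^sup>+x. (\<Prod>i\<in>{k, K}. \<phi> (eps i x) (V k x)) \<partial>M)"
      by (rule nn_integral_cong) (use assms(4) in \<open>auto simp: \<phi>_def indicator_def\<close>)
    also have "\<dots> = (\<integral>\<^sup>+x. p (V k x) ^ card {k, K} \<partial>M)"
      by (rule ES) (use assms(4) in auto)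
    finally show ?thesis using assms(4) by (simp add: power2_eq_square)
  qed
  have eD: "ennreal D = (\<integral>\<^sup>+x. g (V k x) ^ 2 \<partial>M)"
  proof -
    have "ennreal D = (\<integral>\<^sup>+x. indicator {x \<in> space M. V k x > C} x \<partial>M)"
      unfolding D_def by (subst nn_integral_indicator) (auto simp: emeasure_eq_measure)
    also have "\<dots> = (\<integral>\<^sup>+x. g (V k x) ^ 2 \<partial>M)"
      by (rule nn_integral_cong) (auto simp: g_def indicator_def)
    finally show ?thesis .
  qed
  have "(\<integral>\<^sup>+x. p (V k x) * g (V k x) \<partial>M)\<^sup>2 \<le> (\<integral>\<^sup>+x. p (V k x) ^ 2 \<partial>M) * (\<integral>\<^sup>+x. g (V k x) ^ 2 \<partial>M)"
    by (rule Cauchy_Schwarz_nn_integral) measurable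
  then have "(ennreal A)\<^sup>2 \<le> ennreal B' * ennreal D"
    unfolding eA eB eD pg .
  moreover have "A \<ge> 0" "B' \<ge> 0" "D \<ge> 0" unfolding A_def B'_def D_def by auto
  ultimately have AB: "A\<^sup>2 \<le> B' * D"
  proof -
    assume h: "(ennreal A)\<^sup>2 \<le> ennreal B' * ennreal D" "A \<ge> 0" "B' \<ge> 0" "D \<ge> 0"
    have "ennreal (A\<^sup>2) \<le> ennreal (B' * D)"
      using h by (simp add: ennreal_power ennreal_mult)
    then show ?thesis using h by (simp add: ennreal_le_iff)
  qed
  have fin1: "(A / D)\<^sup>2 \<le> B / D"
  proof (cases "D = 0")
    case True then show ?thesis by simp
  next
    case False
    then have Dp: "D > 0" using \<open>D \<ge> 0\<close> by simp
    have "(A / D)\<^sup>2 = A\<^sup>2 / D\<^sup>2" by (simp add: power_divide)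
    also have "\<dots> \<le> (B * D) / D\<^sup>2"
      by (rule divide_right_mono) (use AB B'B Dp in \<open>auto intro: order_trans mult_right_mono\<close>)
    also have "\<dots> = B / D" using Dp by (simp add: power2_eq_square)
    finally show ?thesis .
  qed
  have fin2: "B / D \<le> A / D" using BA \<open>D \<ge> 0\<close> by (rule divide_right_mono)
  show ?thesis using fin1 fin2 si sm by simp
qed

end
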